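(* A supply graph $G$ has the strong uniqueness property if and only if $G$ contains no cycle of length $3$ or more (equivalently, $G$ is obtained from a forest by replacing some edges by sets of parallel edges).
   Context: A supply graph is a finite undirected graph $G=(V,E)$ without loops, parallel edges allowed (so cycles of length $2$ formed by two parallel edges may exist). Its directed version replaces each edge by two opposite arcs. A demand digraph is a simple digraph $H=(T,L)$ with $T\subseteq V$; its arcs are OD-pairs; routes for $(o,d)\in L$ are directed $(o,d)$-paths in the directed version of $G$. Users form a bounded interval with Lebesgue measure, measurably partitioned by OD-pair; each user picks a route of his OD-pair (measurably); flow on an arc is the measure of users using it; users have nonnegative continuous strictly increasing arc cost functions (measurable in the user); an equilibrium is a profile where every user takes a minimal-cost route. $(G,H)$ has the uniqueness property if for every measurable partition of users into OD-pairs and every such cost assignment, the flow on each arc is the same in all equilibria. $G$ has the strong uniqueness property if $(G,H)$ has the uniqueness property for every demand digraph $H=(T,L)$ with $T\subseteq V$. *)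

theory Defs
  imports "HOL-Analysis.Analysis"
begin

text \<open>Supply graph: finite vertex set V, finite edge set E (edges are abstract
  objects, so parallel edges are allowed), each edge e joining the two distinct
  vertices fst (ends e) and snd (ends e) (no loops).\<close>
definition supply_graph :: "'v set \<Rightarrow> 'e set \<Rightarrow> ('e \<Rightarrow> 'v \<times> 'v) \<Rightarrow> bool" where
  "supply_graph V E ends \<longleftrightarrow> finite V \<and> finite E \<and>
     (\<forall>e\<in>E. fst (ends e) \<in> V \<and> snd (ends e) \<in> V \<and> fst (ends e) \<noteq> snd (ends e))"

text \<open>Directed version: each edge e yields two opposite arcs (e,True) and (e,False).\<close>
definition arc_tail :: "('e \<Rightarrow> 'v \<times> 'v) \<Rightarrow> 'e \<times> bool \<Rightarrow> 'v" where
  "arc_tail ends a = (if snd a then fst (ends (fst a)) else snd (ends (fst a)))"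

definition arc_head :: "('e \<Rightarrow> 'v \<times> 'v) \<Rightarrow> 'e \<times> bool \<Rightarrow> 'v" where
  "arc_head ends a = (if snd a then snd (ends (fst a)) else fst (ends (fst a)))"

definition is_route :: "'e set \<Rightarrow> ('e \<Rightarrow> 'v \<times> 'v) \<Rightarrow> 'v \<Rightarrow> 'v \<Rightarrow> ('e \<times> bool) list \<Rightarrow> bool" where
  "is_route E ends s t P \<longleftrightarrow> P \<noteq> [] \<and> (\<forall>a\<in>set P. fst a \<in> E) \<and>
     arc_tail ends (hd P) = s \<and> arc_head ends (last P) = t \<and>
     (\<forall>i. Suc i < length P \<longrightarrow> arc_head ends (P ! i) = arc_tail ends (P ! Suc i)) \<and>
     distinct (map (arc_tail ends) P @ [t])"

definition demand_digraph :: "'v set \<Rightarrow> 'v set \<Rightarrow> ('v \<times> 'v) set \<Rightarrow> bool" where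
  "demand_digraph V T L \<longleftrightarrow> T \<subseteq> V \<and> L \<subseteq> T \<times> T \<and> (\<forall>x. (x, x) \<notin> L)"

definition valid_od :: "('v \<times> 'v) set \<Rightarrow> real set \<Rightarrow> (real \<Rightarrow> 'v \<times> 'v) \<Rightarrow> bool" where
  "valid_od L I od \<longleftrightarrow> (\<forall>u\<in>I. od u \<in> L) \<and> (\<forall>p\<in>L. {u\<in>I. od u = p} \<in> sets lebesgue)"

definition valid_costs :: "'e set \<Rightarrow> real set \<Rightarrow> (real \<Rightarrow> 'e \<times> bool \<Rightarrow> real \<Rightarrow> real) \<Rightarrow> bool" where
  "valid_costs E I c \<longleftrightarrow>
     (\<forall>u\<in>I. \<forall>a. fst a \<in> E \<longrightarrow>
        continuous_on {0..} (c u a) \<and> strict_mono_on {0..} (c u a) \<and> (\<forall>x\<ge>0. 0 \<le> c u a x)) \<and>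
     (\<forall>a x. fst a \<in> E \<longrightarrow> set_borel_measurable lebesgue I (\<lambda>u. c u a x))"

definition flow :: "real set \<Rightarrow> (real \<Rightarrow> ('e \<times> bool) list) \<Rightarrow> 'e \<times> bool \<Rightarrow> real" where
  "flow I \<sigma> a = measure lebesgue {u\<in>I. a \<in> set (\<sigma> u)}"

definition route_cost :: "real set \<Rightarrow> (real \<Rightarrow> 'e \<times> bool \<Rightarrow> real \<Rightarrow> real) \<Rightarrow>
    (real \<Rightarrow> ('e \<times> bool) list) \<Rightarrow> real \<Rightarrow> ('e \<times> bool) list \<Rightarrow> real" where
  "route_cost I c \<sigma> u P = (\<Sum>a\<leftarrow>P. c u a (flow I \<sigma> a))"

definition strategy_profile :: "'e set \<Rightarrow> ('e \<Rightarrow> 'v \<times> 'v) \<Rightarrow> real set \<Rightarrow>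
    (real \<Rightarrow> 'v \<times> 'v) \<Rightarrow> (real \<Rightarrow> ('e \<times> bool) list) \<Rightarrow> bool" where
  "strategy_profile E ends I od \<sigma> \<longleftrightarrow>
     (\<forall>u\<in>I. is_route E ends (fst (od u)) (snd (od u)) (\<sigma> u)) \<and>
     (\<forall>P. {u\<in>I. \<sigma> u = P} \<in> sets lebesgue)"

definition equilibrium :: "'e set \<Rightarrow> ('e \<Rightarrow> 'v \<times> 'v) \<Rightarrow> real set \<Rightarrow>
    (real \<Rightarrow> 'v \<times> 'v) \<Rightarrow> (real \<Rightarrow> 'e \<times> bool \<Rightarrow> real \<Rightarrow> real) \<Rightarrow> (real \<Rightarrow> ('e \<times> bool) list) \<Rightarrow> bool" where
  "equilibrium E ends I od c \<sigma> \<longleftrightarrow> strategy_profile E ends I od \<sigma> \<and>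
     (\<forall>u\<in>I. \<forall>P. is_route E ends (fst (od u)) (snd (od u)) P \<longrightarrow>
        route_cost I c \<sigma> u (\<sigma> u) \<le> route_cost I c \<sigma> u P)"

text \<open>Uniqueness property of (G,H); the users form a bounded interval {lo..hi}.\<close>
definition uniqueness_property :: "'v set \<Rightarrow> 'e set \<Rightarrow> ('e \<Rightarrow> 'v \<times> 'v) \<Rightarrow>
    'v set \<Rightarrow> ('v \<times> 'v) set \<Rightarrow> bool" where
  "uniqueness_property V E ends T L \<longleftrightarrow>
     (\<forall>(lo::real) hi od c \<sigma>1 \<sigma>2.
        valid_od L {lo..hi} od \<longrightarrow> valid_costs E {lo..hi} c \<longrightarrow>
        equilibrium E ends {lo..hi} od c \<sigma>1 \<longrightarrow> equilibrium E ends {lo..hi} od c \<sigma>2 \<longrightarrow>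
        (\<forall>a. fst a \<in> E \<longrightarrow> flow {lo..hi} \<sigma>1 a = flow {lo..hi} \<sigma>2 a))"

definition strong_uniqueness :: "'v set \<Rightarrow> 'e set \<Rightarrow> ('e \<Rightarrow> 'v \<times> 'v) \<Rightarrow> bool" where
  "strong_uniqueness V E ends \<longleftrightarrow>
     (\<forall>T L. demand_digraph V T L \<longrightarrow> uniqueness_property V E ends T L)"

definition has_long_cycle :: "'v set \<Rightarrow> 'e set \<Rightarrow> ('e \<Rightarrow> 'v \<times> 'v) \<Rightarrow> bool" where
  "has_long_cycle V E ends \<longleftrightarrow>
     (\<exists>vs. distinct vs \<and> length vs \<ge> 3 \<and> set vs \<subseteq> V \<and>
        (\<forall>i<length vs. \<exists>e\<in>E.
           {fst (ends e), snd (ends e)} = {vs ! i, vs ! ((i + 1) mod length vs)}))"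

end

theory Submission
  imports Defs
begin


lemma route_vtx:
  assumes "is_route E ends s t P" "l < length P"
  shows "arc_tail ends (P!l) = (map (arc_tail ends) P @ [t]) ! l"
    and "arc_head ends (P!l) = (map (arc_tail ends) P @ [t]) ! Suc l"
proof -
  show "arc_tail ends (P!l) = (map (arc_tail ends) P @ [t]) ! l"
    using assms by (simp add: nth_append)
  show "arc_head ends (P!l) = (map (arc_tail ends) P @ [t]) ! Suc l"
  proof (cases "Suc l < length P")
    case True
    then show ?thesis using assms unfolding is_route_def by (simp add: nth_append)
  next
    case False
    then have "l = length P - 1" using assms by simp
    then have "P ! l = last P" using assms unfolding is_route_def by (simp add: last_conv_nth)
    then show ?thesis using assms False unfolding is_route_def by (simp add: nth_append)
  qed
qed

lemma route_vtx_distinct: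
  assumes "is_route E ends s t P"
  shows "distinct (map (arc_tail ends) P @ [t])"
  using assms unfolding is_route_def by simp

lemma route_vtx0:
  assumes "is_route E ends s t P"
  shows "(map (arc_tail ends) P @ [t]) ! 0 = s"
    and "(map (arc_tail ends) P @ [t]) ! length P = t"
  using assms unfolding is_route_def by (auto simp: nth_append hd_conv_nth)

lemma arc_ends: "{fst (ends (fst a)), snd (ends (fst a))} = {arc_tail ends a, arc_head ends a}"
  unfolding arc_tail_def arc_head_def by auto

lemma chain_rtrancl:
  assumes "\<And>l. i \<le> l \<Longrightarrow> l < j \<Longrightarrow> (f l, f (Suc l)) \<in> R" "i \<le> j"
  shows "(f i, f j) \<in> R\<^sup>*"
  using assms
proof (induction j)
  case 0 then show ?case by simp
next
  case (Suc j)
  show ?case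
  proof (cases "i \<le> j")
    case True
    then have "(f i, f j) \<in> R\<^sup>*" using Suc by auto
    moreover have "(f j, f (Suc j)) \<in> R" using Suc True by auto
    ultimately show ?thesis by simp
  next
    case False then have "i = Suc j" using Suc by simp
    then show ?thesis by simp
  qed
qed

lemma simple_path:
  assumes "(u, v) \<in> R\<^sup>*"
  shows "\<exists>ws. ws \<noteq> [] \<and> hd ws = u \<and> last ws = v \<and> distinct ws \<and>
           (\<forall>i. Suc i < length ws \<longrightarrow> (ws!i, ws!Suc i) \<in> R)"
  using assms
proof (induction rule: converse_rtrancl_induct)
  case base
  then show ?case by (intro exI[of _ "[v]"]) auto
next
  case (step u w)
  then obtain ws where ws: "ws \<noteq> []" "hd ws = w" "last ws = v" "distinct ws"
    "\<forall>i. Suc i < length ws \<longrightarrow> (ws!i, ws!Suc i) \<in> R" by blast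
  show ?case
  proof (cases "u \<in> set ws")
    case True
    then obtain p q where pq: "ws = p @ u # q" by (meson split_list)
    have "\<forall>i. Suc i < length (u#q) \<longrightarrow> ((u#q)!i, (u#q)!Suc i) \<in> R"
    proof (intro allI impI)
      fix i assume "Suc i < length (u#q)"
      then have "Suc (length p + i) < length ws" using pq by simp
      then have "(ws!(length p + i), ws!Suc (length p + i)) \<in> R" using ws by blast
      then show "((u#q)!i, (u#q)!Suc i) \<in> R" using pq
        by (simp add: nth_append)
    qed
    moreover have "last (u#q) = v" using ws pq by (metis last_appendR list.distinct(1))
    moreover have "distinct (u#q)" using ws pq by simp
    ultimately show ?thesis by (intro exI[of _ "u#q"]) auto
  next
    case False
    have "\<forall>i. Suc i < length (u#ws) \<longrightarrow> ((u#ws)!i, (u#ws)!Suc i) \<in> R"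
    proof (intro allI impI)
      fix i assume i: "Suc i < length (u#ws)"
      show "((u#ws)!i, (u#ws)!Suc i) \<in> R"
      proof (cases i)
        case 0 then show ?thesis using step ws by (simp add: hd_conv_nth)
      next
        case (Suc j) then show ?thesis using ws i by simp
      qed
    qed
    then show ?thesis using ws False by (intro exI[of _ "u#ws"]) auto
  qed
qed

lemma dnth: "distinct W \<Longrightarrow> i < length W \<Longrightarrow> j < length W \<Longrightarrow> i \<noteq> j \<Longrightarrow> W!i \<noteq> W!j"
  by (simp add: nth_eq_iff_index_eq)

lemma forest_arc:
  assumes sg: "supply_graph V E ends" and nc: "\<not> has_long_cycle V E ends"
    and P: "is_route E ends s t P" and Q: "is_route E ends s t Q" and a: "a \<in> set P"
  shows "\<exists>b\<in>set Q. arc_tail ends b = arc_tail ends a \<and> arc_head ends b = arc_head ends a"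
proof (rule ccontr)
  assume nb: "\<not> ?thesis"
  define x where "x = arc_tail ends a"
  define y where "y = arc_head ends a"
  have aE: "fst a \<in> E" using P a unfolding is_route_def by auto
  have xy: "x \<noteq> y" using sg aE unfolding supply_graph_def x_def y_def arc_tail_def arc_head_def
    by auto
  have xV: "x \<in> V" using sg aE unfolding supply_graph_def x_def arc_tail_def by auto
  define R where "R = {(u,v). (\<exists>e\<in>E. {fst (ends e), snd (ends e)} = {u,v}) \<and> {u,v} \<noteq> {x,y}}"
  have symR: "sym R" unfolding R_def sym_def by (auto simp: insert_commute)
  have symRs: "(u,v) \<in> R\<^sup>* \<Longrightarrow> (v,u) \<in> R\<^sup>*" for u v
    using sym_rtrancl[OF symR] by (meson symD)
  define W where "W = map (arc_tail ends) P @ [t]"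
  define W' where "W' = map (arc_tail ends) Q @ [t]"
  have dW: "distinct W" and dW': "distinct W'"
    using route_vtx_distinct[OF P] route_vtx_distinct[OF Q] W_def W'_def by auto
  have lW: "length W = Suc (length P)" and lW': "length W' = Suc (length Q)"
    unfolding W_def W'_def by auto
  have edgeP: "(W!l, W!Suc l) \<in> R" if "l < length P" "{W!l, W!Suc l} \<noteq> {x,y}" for l
  proof -
    have "fst (P!l) \<in> E" using P that unfolding is_route_def by auto
    moreover have "{fst (ends (fst (P!l))), snd (ends (fst (P!l)))} = {W!l, W!Suc l}"
      using arc_ends route_vtx[OF P that(1)] W_def by metis
    ultimately show ?thesis using that unfolding R_def by blast
  qed
  have edgeQ: "(W'!l, W'!Suc l) \<in> R" if "l < length Q" "{W'!l, W'!Suc l} \<noteq> {x,y}" for l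
  proof -
    have "fst (Q!l) \<in> E" using Q that unfolding is_route_def by auto
    moreover have "{fst (ends (fst (Q!l))), snd (ends (fst (Q!l)))} = {W'!l, W'!Suc l}"
      using arc_ends route_vtx[OF Q that(1)] W'_def by metis
    ultimately show ?thesis using that unfolding R_def by blast
  qed
  obtain i where i: "i < length P" "P!i = a" using a by (meson in_set_conv_nth)
  have Wi: "W!i = x" "W!Suc i = y" using route_vtx[OF P i(1)] i W_def x_def y_def by auto
  have W0: "W!0 = s" "W!length P = t" using route_vtx0[OF P] W_def by auto
  have W'0: "W'!0 = s" "W'!length Q = t" using route_vtx0[OF Q] W'_def by auto
  have suf: "(y, t) \<in> R\<^sup>*"
  proof -
    have "(W!Suc i, W!length P) \<in> R\<^sup>*"
    proof (rule chain_rtrancl)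
      fix l assume l: "Suc i \<le> l" "l < length P"
      have "W!l \<noteq> x" "W!Suc l \<noteq> x" using dnth[OF dW, of l i] dnth[OF dW, of "Suc l" i] l lW Wi i by auto
      then show "(W!l, W!Suc l) \<in> R" using edgeP[OF l(2)] by (auto simp: doubleton_eq_iff)
    qed (use i in simp)
    then show ?thesis using Wi W0 by simp
  qed
  have pre: "(s, x) \<in> R\<^sup>*"
  proof -
    have "(W!0, W!i) \<in> R\<^sup>*"
    proof (rule chain_rtrancl)
      fix l assume l: "0 \<le> l" "l < i"
      have "W!l \<noteq> y" "W!Suc l \<noteq> y" using dnth[OF dW, of l "Suc i"] dnth[OF dW, of "Suc l" "Suc i"] l lW Wi i by auto
      then show "(W!l, W!Suc l) \<in> R" using edgeP[of l] l i by (auto simp: doubleton_eq_iff)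
    qed simp
    then show ?thesis using Wi W0 by simp
  qed
  have yx: "(y, x) \<in> R\<^sup>*"
  proof (cases "\<exists>j<length Q. W'!j = y \<and> W'!Suc j = x")
    case True
    then obtain j where j: "j < length Q" "W'!j = y" "W'!Suc j = x" by blast
    have "(W'!Suc j, W'!length Q) \<in> R\<^sup>*"
    proof (rule chain_rtrancl)
      fix l assume l: "Suc j \<le> l" "l < length Q"
      have "W'!l \<noteq> y" "W'!Suc l \<noteq> y" using dnth[OF dW', of l j] dnth[OF dW', of "Suc l" j] l lW' j by auto
      then show "(W'!l, W'!Suc l) \<in> R" using edgeQ[OF l(2)] by (auto simp: doubleton_eq_iff)
    qed (use j in simp)
    then have "(t, x) \<in> R\<^sup>*" using j W'0 symRs by simp
    then show ?thesis using suf by simp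
  next
    case False
    have "(W'!0, W'!length Q) \<in> R\<^sup>*"
    proof (rule chain_rtrancl)
      fix l assume l: "0 \<le> l" "l < length Q"
      have "\<not> (W'!l = x \<and> W'!Suc l = y)"
      proof
        assume h: "W'!l = x \<and> W'!Suc l = y"
        have "Q!l \<in> set Q" using l by simp
        moreover have "arc_tail ends (Q!l) = x" "arc_head ends (Q!l) = y"
          using route_vtx[OF Q l(2)] h W'_def by auto
        ultimately show False using nb x_def y_def by blast
      qed
      moreover have "\<not> (W'!l = y \<and> W'!Suc l = x)" using False l by blast
      ultimately have "{W'!l, W'!Suc l} \<noteq> {x,y}" using xy by (auto simp: doubleton_eq_iff)
      then show "(W'!l, W'!Suc l) \<in> R" using edgeQ[OF l(2)] by auto
    qed simp
    then have "(t, s) \<in> R\<^sup>*" using W'0 symRs by simp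
    then show ?thesis using suf pre by simp
  qed
  obtain ws where ws: "ws \<noteq> []" "hd ws = y" "last ws = x" "distinct ws"
    "\<forall>i. Suc i < length ws \<longrightarrow> (ws!i, ws!Suc i) \<in> R"
    using simple_path[OF yx] by blast
  have l1: "length ws \<noteq> 1"
  proof
    assume "length ws = 1"
    then have "hd ws = last ws" using ws by (simp add: hd_conv_nth last_conv_nth)
    then show False using ws xy by simp
  qed
  have l2: "length ws \<noteq> 2"
  proof
    assume h: "length ws = 2"
    then have "(ws!0, ws!1) \<in> R" using ws by simp
    moreover have "ws!0 = y" "ws!1 = x" using ws h by (simp_all add: hd_conv_nth last_conv_nth)
    ultimately show False unfolding R_def by (auto simp: insert_commute)
  qed
  have "length ws \<noteq> 0" using ws(1) by simp
  then have len: "length ws \<ge> 3" using l1 l2 by linarith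
  have edge: "\<exists>e\<in>E. {fst (ends e), snd (ends e)} = {ws ! j, ws ! ((j + 1) mod length ws)}"
    if j: "j < length ws" for j
  proof (cases "Suc j < length ws")
    case True
    then have "(ws!j, ws!Suc j) \<in> R" using ws by blast
    then show ?thesis using True unfolding R_def by auto
  next
    case False
    then have "j = length ws - 1" using j by simp
    then have "ws!j = x" "ws!((j+1) mod length ws) = y"
      using ws j by (simp_all add: last_conv_nth hd_conv_nth)
    moreover have "{fst (ends (fst a)), snd (ends (fst a))} = {x, y}"
      using arc_ends x_def y_def by metis
    ultimately show ?thesis using aE by (metis insert_commute)
  qed
  have "set ws \<subseteq> V"
  proof
    fix z assume "z \<in> set ws"
    then obtain j where j: "j < length ws" "ws!j = z" by (meson in_set_conv_nth)
    obtain e where "e \<in> E" "{fst (ends e), snd (ends e)} = {ws ! j, ws ! ((j + 1) mod length ws)}"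
      using edge[OF j(1)] by blast
    then show "z \<in> V" using sg j unfolding supply_graph_def by (metis insertCI doubleton_eq_iff)
  qed
  then have "has_long_cycle V E ends" unfolding has_long_cycle_def
    using ws(4) len edge by blast
  then show False using nc by simp
qed


lemma route_update:
  assumes P: "is_route E ends s t P" and i: "i < length P" and bE: "fst b \<in> E"
    and bt: "arc_tail ends b = arc_tail ends (P!i)" and bh: "arc_head ends b = arc_head ends (P!i)"
  shows "is_route E ends s t (P[i:=b])"
proof -
  let ?P = "P[i:=b]"
  have mt: "map (arc_tail ends) ?P = map (arc_tail ends) P"
  proof -
    have "map (arc_tail ends) ?P = (map (arc_tail ends) P)[i := arc_tail ends (P!i)]"
      by (simp add: map_update bt)
    also have "\<dots> = map (arc_tail ends) P"
      by (metis i length_map list_update_id nth_map)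
    finally show ?thesis .
  qed
  have mh: "map (arc_head ends) ?P = map (arc_head ends) P"
  proof -
    have "map (arc_head ends) ?P = (map (arc_head ends) P)[i := arc_head ends (P!i)]"
      by (simp add: map_update bh)
    also have "\<dots> = map (arc_head ends) P"
      by (metis i length_map list_update_id nth_map)
    finally show ?thesis .
  qed
  have ne: "P \<noteq> []" "?P \<noteq> []" using P unfolding is_route_def by auto
  have "arc_tail ends (hd ?P) = arc_tail ends (hd P)"
    using mt ne by (metis hd_map)
  moreover have "arc_head ends (last ?P) = arc_head ends (last P)"
    using mh ne by (metis last_map)
  moreover have "\<forall>j. Suc j < length ?P \<longrightarrow> arc_head ends (?P ! j) = arc_tail ends (?P ! Suc j)"
  proof (intro allI impI)
    fix j assume j: "Suc j < length ?P"
    have "arc_head ends (?P ! j) = map (arc_head ends) ?P ! j" using j by simp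
    also have "\<dots> = map (arc_head ends) P ! j" using mh by simp
    also have "\<dots> = arc_tail ends (P ! Suc j)" using j P unfolding is_route_def by simp
    also have "\<dots> = map (arc_tail ends) P ! Suc j" using j by simp
    also have "\<dots> = map (arc_tail ends) ?P ! Suc j" using mt by simp
    also have "\<dots> = arc_tail ends (?P ! Suc j)" using j by simp
    finally show "arc_head ends (?P ! j) = arc_tail ends (?P ! Suc j)" .
  qed
  moreover have "\<forall>a\<in>set ?P. fst a \<in> E" using P bE set_update_subset_insert unfolding is_route_def
    by fastforce
  ultimately show ?thesis using P ne mt unfolding is_route_def by simp
qed

lemma sum_list_map_update:
  fixes f :: "'a \<Rightarrow> real"
  shows "i < length xs \<Longrightarrow> sum_list (map f (xs[i:=b])) = sum_list (map f xs) - f (xs!i) + f b"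
proof (induction xs arbitrary: i)
  case Nil then show ?case by simp
next
  case (Cons x xs)
  then show ?case by (cases i) auto
qed

lemma route_cost_update:
  "i < length P \<Longrightarrow> route_cost I c \<sigma> u (P[i:=b]) =
     route_cost I c \<sigma> u P - c u (P!i) (flow I \<sigma> (P!i)) + c u b (flow I \<sigma> b)"
  unfolding route_cost_def by (rule sum_list_map_update)

lemma route_tail_inj:
  assumes "is_route E ends s t P" "a \<in> set P" "a' \<in> set P" "arc_tail ends a = arc_tail ends a'"
  shows "a = a'"
proof -
  have "distinct (map (arc_tail ends) P)" using assms unfolding is_route_def by simp
  then have "inj_on (arc_tail ends) (set P)" by (simp add: distinct_map)
  then show ?thesis using assms by (meson inj_onD)
qed

lemma route_in_Rts:
  assumes "is_route E ends s t P"
  shows "P \<in> {P. set P \<subseteq> E \<times> UNIV \<and> distinct P}"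
proof -
  have "distinct (map (arc_tail ends) P)" using assms unfolding is_route_def by simp
  then have "distinct P" using distinct_map by blast
  moreover have "set P \<subseteq> E \<times> UNIV" using assms unfolding is_route_def by force
  ultimately show ?thesis by simp
qed

lemma finite_Rts: "finite E \<Longrightarrow> finite {P. set P \<subseteq> (E::'e set) \<times> (UNIV::bool set) \<and> distinct P}"
  by (rule finite_subset_distinct) simp

lemma flow_set_sets:
  assumes sp: "strategy_profile E ends I od \<sigma>" and fE: "finite E"
  shows "{u\<in>I. a \<in> set (\<sigma> u)} \<in> sets lebesgue"
proof -
  define Rts where "Rts = {P. set P \<subseteq> E \<times> (UNIV::bool set) \<and> distinct P}"
  have "{u\<in>I. a \<in> set (\<sigma> u)} = (\<Union>P\<in>{P\<in>Rts. a \<in> set P}. {u\<in>I. \<sigma> u = P})"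
    using sp route_in_Rts unfolding strategy_profile_def Rts_def by fastforce
  also have "\<dots> \<in> sets lebesgue"
  proof (rule sets.finite_UN)
    show "finite {P\<in>Rts. a \<in> set P}" using finite_Rts[OF fE] unfolding Rts_def
      by (rule finite_subset[rotated]) auto
    show "\<And>P. P \<in> {P\<in>Rts. a \<in> set P} \<Longrightarrow> {u\<in>I. \<sigma> u = P} \<in> sets lebesgue"
      using sp unfolding strategy_profile_def by blast
  qed
  finally show ?thesis .
qed

lemma unique_side:
  assumes sg: "supply_graph V E ends" and nc: "\<not> has_long_cycle V E ends"
    and vc: "valid_costs E {lo..hi} c"
    and e1: "equilibrium E ends {lo..hi} od c \<sigma>1" and e2: "equilibrium E ends {lo..hi} od c \<sigma>2"
    and a0E: "fst a0 \<in> E"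
  shows "\<not> flow {lo..hi} \<sigma>2 a0 < flow {lo..hi} \<sigma>1 a0"
proof
  assume lt0: "flow {lo..hi} \<sigma>2 a0 < flow {lo..hi} \<sigma>1 a0"
  define I where "I = {lo..hi}"
  define f1 where "f1 = flow I \<sigma>1"
  define f2 where "f2 = flow I \<sigma>2"
  have fE: "finite E" using sg unfolding supply_graph_def by simp
  have sp1: "strategy_profile E ends I od \<sigma>1" and sp2: "strategy_profile E ends I od \<sigma>2"
    using e1 e2 unfolding equilibrium_def I_def by auto
  have r1: "is_route E ends (fst (od u)) (snd (od u)) (\<sigma>1 u)" if "u \<in> I" for u
    using sp1 that unfolding strategy_profile_def by auto
  have r2: "is_route E ends (fst (od u)) (snd (od u)) (\<sigma>2 u)" if "u \<in> I" for u
    using sp2 that unfolding strategy_profile_def by auto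
  have f1nn: "f1 a \<ge> 0" and f2nn: "f2 a \<ge> 0" for a
    unfolding f1_def f2_def flow_def by auto
  have smono: "c u a x < c u a y" if "u \<in> I" "fst a \<in> E" "0 \<le> x" "x < y" for u a x y
  proof -
    have "\<forall>u\<in>I. \<forall>a. fst a \<in> E \<longrightarrow> strict_mono_on {0..} (c u a)"
      using vc unfolding valid_costs_def I_def by blast
    then have "strict_mono_on {0..} (c u a)" using that by blast
    then show ?thesis using that by (auto intro: strict_mono_onD)
  qed
  have mono: "c u a x \<le> c u a y" if "u \<in> I" "fst a \<in> E" "0 \<le> x" "x \<le> y" for u a x y
  proof (cases "x = y")
    case False
    then have xy: "x < y" using that(4) by simp
    show ?thesis using smono[OF that(1,2,3) xy] by simp
  qed simp
  have key: "f2 b < f1 b"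
    if u: "u \<in> I" and a: "a \<in> set (\<sigma>1 u)" and lt: "f2 a < f1 a" and b: "b \<in> set (\<sigma>2 u)"
      and bt: "arc_tail ends b = arc_tail ends a" and bh: "arc_head ends b = arc_head ends a" for u a b
  proof (rule ccontr)
    assume "\<not> f2 b < f1 b"
    then have le: "f1 b \<le> f2 b" by simp
    have aE: "fst a \<in> E" using r1[OF u] a unfolding is_route_def by auto
    have bE: "fst b \<in> E" using r2[OF u] b unfolding is_route_def by auto
    obtain i where i: "i < length (\<sigma>1 u)" "\<sigma>1 u ! i = a" using a by (meson in_set_conv_nth)
    obtain j where j: "j < length (\<sigma>2 u)" "\<sigma>2 u ! j = b" using b by (meson in_set_conv_nth)
    have R1: "is_route E ends (fst (od u)) (snd (od u)) ((\<sigma>1 u)[i:=b])"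
      using route_update[OF r1[OF u] i(1) bE] i bt bh by simp
    have R2: "is_route E ends (fst (od u)) (snd (od u)) ((\<sigma>2 u)[j:=a])"
      using route_update[OF r2[OF u] j(1) aE] j bt bh by simp
    have "route_cost I c \<sigma>1 u (\<sigma>1 u) \<le> route_cost I c \<sigma>1 u ((\<sigma>1 u)[i:=b])"
      using e1 R1 u unfolding equilibrium_def I_def by blast
    then have c1: "c u a (f1 a) \<le> c u b (f1 b)"
      using route_cost_update[OF i(1), of I c \<sigma>1 u b] i unfolding f1_def by simp
    have "route_cost I c \<sigma>2 u (\<sigma>2 u) \<le> route_cost I c \<sigma>2 u ((\<sigma>2 u)[j:=a])"
      using e2 R2 u unfolding equilibrium_def I_def by blast
    then have c2: "c u b (f2 b) \<le> c u a (f2 a)"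
      using route_cost_update[OF j(1), of I c \<sigma>2 u a] j unfolding f2_def by simp
    have "c u a (f2 a) < c u a (f1 a)" using smono[OF u aE f2nn lt] .
    moreover have "c u b (f1 b) \<le> c u b (f2 b)" using mono[OF u bE f1nn le] .
    ultimately show False using c1 c2 by linarith
  qed
  define x0 where "x0 = arc_tail ends a0"
  define y0 where "y0 = arc_head ends a0"
  define B where "B = {a. fst a \<in> E \<and> arc_tail ends a = x0 \<and> arc_head ends a = y0 \<and> f2 a < f1 a}"
  have finB: "finite B"
  proof (rule finite_subset)
    show "B \<subseteq> E \<times> UNIV" unfolding B_def by force
  qed (use fE in simp)
  have a0B: "a0 \<in> B" using a0E lt0 unfolding B_def x0_def y0_def f1_def f2_def I_def by simp
  define S1 where "S1 a = {u\<in>I. a \<in> set (\<sigma>1 u)}" for a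
  define S2 where "S2 a = {u\<in>I. a \<in> set (\<sigma>2 u)}" for a
  have S1s: "S1 a \<in> sets lebesgue" and S2s: "S2 a \<in> sets lebesgue" for a
    using flow_set_sets[OF sp1 fE] flow_set_sets[OF sp2 fE] unfolding S1_def S2_def by auto
  have Ifm: "I \<in> fmeasurable lebesgue" unfolding I_def by (rule lmeasurable_interval)
  have S1f: "S1 a \<in> fmeasurable lebesgue" and S2f: "S2 a \<in> fmeasurable lebesgue" for a
    using fmeasurableI2[OF Ifm _ S1s] fmeasurableI2[OF Ifm _ S2s] unfolding S1_def S2_def by auto
  have disj1: "disjoint_family_on S1 B"
    unfolding disjoint_family_on_def
  proof (intro ballI impI)
    fix m n assume mn: "m \<in> B" "n \<in> B" "m \<noteq> n"
    show "S1 m \<inter> S1 n = {}"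
    proof (rule equals0I)
      fix u assume "u \<in> S1 m \<inter> S1 n"
      then have u: "u \<in> I" "m \<in> set (\<sigma>1 u)" "n \<in> set (\<sigma>1 u)" unfolding S1_def by auto
      have "arc_tail ends m = arc_tail ends n" using mn unfolding B_def by simp
      then have "m = n" using route_tail_inj[OF r1[OF u(1)] u(2,3)] by simp
      then show False using mn by simp
    qed
  qed
  have disj2: "disjoint_family_on S2 B"
    unfolding disjoint_family_on_def
  proof (intro ballI impI)
    fix m n assume mn: "m \<in> B" "n \<in> B" "m \<noteq> n"
    show "S2 m \<inter> S2 n = {}"
    proof (rule equals0I)
      fix u assume "u \<in> S2 m \<inter> S2 n"
      then have u: "u \<in> I" "m \<in> set (\<sigma>2 u)" "n \<in> set (\<sigma>2 u)" unfolding S2_def by auto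
      have "arc_tail ends m = arc_tail ends n" using mn unfolding B_def by simp
      then have "m = n" using route_tail_inj[OF r2[OF u(1)] u(2,3)] by simp
      then show False using mn by simp
    qed
  qed
  have "measure lebesgue (\<Union>a\<in>B. S1 a) = (\<Sum>a\<in>B. measure lebesgue (S1 a))"
    by (rule measure_finite_Union[OF finB _ disj1]) (use S1s fmeasurableD2[OF S1f] in auto)
  then have m1: "measure lebesgue (\<Union>a\<in>B. S1 a) = (\<Sum>a\<in>B. f1 a)"
    unfolding f1_def flow_def S1_def by simp
  have "measure lebesgue (\<Union>a\<in>B. S2 a) = (\<Sum>a\<in>B. measure lebesgue (S2 a))"
    by (rule measure_finite_Union[OF finB _ disj2]) (use S2s fmeasurableD2[OF S2f] in auto)
  then have m2: "measure lebesgue (\<Union>a\<in>B. S2 a) = (\<Sum>a\<in>B. f2 a)"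
    unfolding f2_def flow_def S2_def by simp
  have sub: "(\<Union>a\<in>B. S1 a) \<subseteq> (\<Union>a\<in>B. S2 a)"
  proof
    fix u assume "u \<in> (\<Union>a\<in>B. S1 a)"
    then obtain a where a: "a \<in> B" "u \<in> I" "a \<in> set (\<sigma>1 u)" unfolding S1_def by auto
    obtain b where b: "b \<in> set (\<sigma>2 u)" "arc_tail ends b = arc_tail ends a" "arc_head ends b = arc_head ends a"
      using forest_arc[OF sg nc r1[OF a(2)] r2[OF a(2)] a(3)] by blast
    have "f2 b < f1 b" using key[OF a(2) a(3) _ b] a(1) unfolding B_def by simp
    moreover have "fst b \<in> E" using r2[OF a(2)] b(1) unfolding is_route_def by auto
    ultimately have "b \<in> B" using a(1) b unfolding B_def by simp
    then show "u \<in> (\<Union>a\<in>B. S2 a)" using a b unfolding S2_def by auto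
  qed
  have "(\<Union>a\<in>B. S2 a) \<in> fmeasurable lebesgue"
    using finB S2f by (intro fmeasurable.finite_UN) auto
  moreover have "(\<Union>a\<in>B. S1 a) \<in> sets lebesgue" using finB S1s by auto
  ultimately have "measure lebesgue (\<Union>a\<in>B. S1 a) \<le> measure lebesgue (\<Union>a\<in>B. S2 a)"
    using sub by (intro measure_mono_fmeasurable) auto
  then have "(\<Sum>a\<in>B. f1 a) \<le> (\<Sum>a\<in>B. f2 a)" using m1 m2 by simp
  moreover have "(\<Sum>a\<in>B. f2 a) < (\<Sum>a\<in>B. f1 a)"
  proof (rule sum_strict_mono[OF finB])
    show "B \<noteq> {}" using a0B by auto
  qed (auto simp: B_def)
  ultimately show False by simp
qed

lemma dir1:
  assumes sg: "supply_graph V E ends" and nc: "\<not> has_long_cycle V E ends"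
  shows "strong_uniqueness V E ends"
  unfolding strong_uniqueness_def uniqueness_property_def
proof (intro allI impI)
  fix T L lo hi od c \<sigma>1 \<sigma>2 and a :: "'b \<times> bool"
  assume vc: "valid_costs E {lo..hi} c" and e1: "equilibrium E ends {lo..hi} od c \<sigma>1"
    and e2: "equilibrium E ends {lo..hi} od c \<sigma>2" and aE: "fst a \<in> E"
  show "flow {lo..hi} \<sigma>1 a = flow {lo..hi} \<sigma>2 a"
    using unique_side[OF sg nc vc e1 e2 aE] unique_side[OF sg nc vc e2 e1 aE] by linarith
qed



lemma piece_sets: "{u\<in>{0..7::real}. (if u \<le> 2 then X else if u \<le> 5 then Y else Z) = p} \<in> sets lebesgue"
proof -
  have "{u\<in>{0..7::real}. (if u \<le> 2 then X else if u \<le> 5 then Y else Z) = p} \<in> sets borel"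
    by measurable
  then show ?thesis by simp
qed

lemma piece_meas: "set_borel_measurable lebesgue {0..7::real} (\<lambda>u. (if u \<le> 2 then X else if u \<le> 5 then Y else (Z::real)))"
proof -
  have "(\<lambda>u::real. indicator {0..7} u *\<^sub>R (if u \<le> 2 then X else if u \<le> 5 then Y else (Z::real))) \<in> borel_measurable borel"
    by measurable
  then have "(\<lambda>u::real. indicator {0..7} u *\<^sub>R (if u \<le> 2 then X else if u \<le> 5 then Y else (Z::real))) \<in> borel_measurable lborel"
    by simp
  then show ?thesis unfolding set_borel_measurable_def by (rule measurable_completion)
qed

lemma flow3:
  "flow {0..7} (\<lambda>u. if u \<le> 2 then P1 else if u \<le> 5 then P2 else P3) a =
    (if a \<in> set P1 then 2 else 0) + (if a \<in> set P2 then 3 else 0) + (if a \<in> set P3 then 2 else 0)"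
proof -
  define X where "X = (if a \<in> set P1 then {0..2} else ({}::real set))"
  define Y where "Y = (if a \<in> set P2 then {2<..5} else ({}::real set))"
  define Z where "Z = (if a \<in> set P3 then {5<..7} else ({}::real set))"
  have eq: "{u\<in>{0..7}. a \<in> set (if u \<le> 2 then P1 else if u \<le> 5 then P2 else P3)} = X \<union> Y \<union> Z"
    unfolding X_def Y_def Z_def by auto
  have bX: "X \<in> sets borel" "Y \<in> sets borel" "Z \<in> sets borel" unfolding X_def Y_def Z_def by auto
  have fm: "cbox 0 (7::real) \<in> fmeasurable lborel" by (rule fmeasurable_cbox)
  have sub: "X \<subseteq> cbox 0 7" "Y \<subseteq> cbox 0 7" "Z \<subseteq> cbox 0 7" unfolding X_def Y_def Z_def by auto
  have fX: "X \<in> fmeasurable lborel" "Y \<in> fmeasurable lborel" "Z \<in> fmeasurable lborel"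
    using fmeasurableI2[OF fm sub(1)] fmeasurableI2[OF fm sub(2)] fmeasurableI2[OF fm sub(3)] bX by auto
  have i1: "X \<inter> Y = {}" "(X \<union> Y) \<inter> Z = {}" unfolding X_def Y_def Z_def by auto
  have "measure lborel (X \<union> Y \<union> Z) = measure lborel X + measure lborel Y + measure lborel Z"
    using measure_Un3[OF fX(1) fX(2)] measure_Un3[OF fmeasurable.Un[OF fX(1) fX(2)] fX(3)] i1 by simp
  moreover have "measure lborel X = (if a \<in> set P1 then 2 else 0)" unfolding X_def by simp
  moreover have "measure lborel Y = (if a \<in> set P2 then 3 else 0)" unfolding Y_def by simp
  moreover have "measure lborel Z = (if a \<in> set P3 then 2 else 0)" unfolding Z_def by simp
  moreover have "measure lebesgue (X \<union> Y \<union> Z) = measure lborel (X \<union> Y \<union> Z)"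
    using bX by simp
  ultimately show ?thesis unfolding flow_def eq by simp
qed



lemma route_by_vtx:
  assumes ne: "P \<noteq> []" and E: "\<forall>a\<in>set P. fst a \<in> E"
    and tl: "\<And>l. l < length P \<Longrightarrow> arc_tail ends (P!l) = g l"
    and hd: "\<And>l. l < length P \<Longrightarrow> arc_head ends (P!l) = g (Suc l)"
    and inj: "inj_on g {0..length P}"
  shows "is_route E ends (g 0) (g (length P)) P"
proof -
  have "arc_tail ends (hd P) = g 0" using ne tl by (simp add: hd_conv_nth)
  moreover have "arc_head ends (last P) = g (length P)"
    using ne hd[of "length P - 1"] by (simp add: last_conv_nth)
  moreover have "\<forall>i. Suc i < length P \<longrightarrow> arc_head ends (P ! i) = arc_tail ends (P ! Suc i)"
    using tl hd by simp
  moreover have "map (arc_tail ends) P @ [g (length P)] = map g [0..<Suc (length P)]"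
    by (rule nth_equalityI) (auto simp: nth_append tl)
  moreover have "distinct (map g [0..<Suc (length P)])"
  proof -
    have e: "set [0..<Suc (length P)] = {0..length P}" by auto
    have "inj_on g (set [0..<Suc (length P)])" using inj by (simp only: e)
    then show ?thesis by (simp only: distinct_map distinct_upt)
  qed
  ultimately show ?thesis using ne E unfolding is_route_def by simp
qed

lemma route_pot:
  fixes phi :: "'v \<Rightarrow> real"
  assumes P: "is_route E ends s t P"
    and w: "\<And>a. fst a \<in> E \<Longrightarrow> w a \<ge> phi (arc_head ends a) - phi (arc_tail ends a)"
  shows "sum_list (map w P) \<ge> phi t - phi s"
proof -
  define W where "W = map (arc_tail ends) P @ [t]"
  have "sum_list (map w P) = (\<Sum>l<length P. w (P!l))"
    by (simp add: sum_list_sum_nth atLeast0LessThan)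
  also have "\<dots> \<ge> (\<Sum>l<length P. phi (W!Suc l) - phi (W!l))"
  proof (rule sum_mono)
    fix l assume "l \<in> {..<length P}"
    then have l: "l < length P" by simp
    have "fst (P!l) \<in> E" using P l unfolding is_route_def by auto
    then show "phi (W!Suc l) - phi (W!l) \<le> w (P!l)"
      using w route_vtx[OF P l] W_def by metis
  qed
  moreover have "(\<Sum>l<length P. phi (W!Suc l) - phi (W!l)) = phi (W!length P) - phi (W!0)"
    by (rule sum_lessThan_telescope)
  moreover have "W!length P = t" "W!0 = s" using route_vtx0[OF P] W_def by auto
  ultimately show ?thesis by simp
qed

lemma add_mod_cancel: "((b::nat) + x) mod k = (b + y) mod k \<Longrightarrow> x mod k = y mod k"
  by (simp add: nat_mod_eq_iff)

locale cyc =
  fixes V :: "'v set" and E :: "'e set" and ends :: "'e \<Rightarrow> 'v \<times> 'v" and vs :: "'v list"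
    and ed :: "nat \<Rightarrow> 'e"
  assumes sg: "supply_graph V E ends" and dvs: "distinct vs" and k3: "3 \<le> length vs"
    and vsV: "set vs \<subseteq> V"
    and edE: "\<And>i. i < length vs \<Longrightarrow> ed i \<in> E"
    and edends: "\<And>i. i < length vs \<Longrightarrow>
        {fst (ends (ed i)), snd (ends (ed i))} = {vs!i, vs!((i+1) mod length vs)}"
begin

abbreviation "k \<equiv> length vs"

definition v :: "nat \<Rightarrow> 'v" where "v i = vs ! (i mod k)"
definition fa :: "nat \<Rightarrow> 'e \<times> bool" where
  "fa i = (ed (i mod k), fst (ends (ed (i mod k))) = v i)"
definition ba :: "nat \<Rightarrow> 'e \<times> bool" where
  "ba i = (ed (i mod k), fst (ends (ed (i mod k))) \<noteq> v i)"

lemma kpos: "0 < k" using k3 by linarith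

lemma v_mod[simp]: "v (i mod k) = v i" unfolding v_def by simp

lemma v_add_k[simp]: "v (i + k) = v i" unfolding v_def by simp

lemma v_eq: "v i = v j \<longleftrightarrow> i mod k = j mod k"
  unfolding v_def using dvs kpos by (simp add: nth_eq_iff_index_eq)

lemma v_in: "v i \<in> set vs" unfolding v_def using kpos by simp

lemma ends_ed: "{fst (ends (ed (i mod k))), snd (ends (ed (i mod k)))} = {v i, v (Suc i)}"
proof -
  have "{fst (ends (ed (i mod k))), snd (ends (ed (i mod k)))} = {vs!(i mod k), vs!((i mod k + 1) mod k)}"
    using edends[of "i mod k"] kpos by simp
  moreover have "(i mod k + 1) mod k = Suc i mod k" by (simp add: mod_Suc_eq)
  ultimately show ?thesis unfolding v_def by simp
qed

lemma v_Suc_ne: "v i \<noteq> v (Suc i)"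
proof
  assume "v i = v (Suc i)"
  then have "i mod k = Suc i mod k" using v_eq by simp
  then have "(i + 0) mod k = (i + 1) mod k" by simp
  then have "0 mod k = 1 mod k" by (rule add_mod_cancel)
  then show False using k3 by simp
qed

lemma fa_E: "fst (fa i) \<in> E" and ba_E: "fst (ba i) \<in> E"
  unfolding fa_def ba_def using edE kpos by auto

lemma fa_tail: "arc_tail ends (fa i) = v i" and fa_head: "arc_head ends (fa i) = v (Suc i)"
  and ba_tail: "arc_tail ends (ba i) = v (Suc i)" and ba_head: "arc_head ends (ba i) = v i"
  using ends_ed[of i] v_Suc_ne[of i]
  unfolding fa_def ba_def arc_tail_def arc_head_def by (auto simp: doubleton_eq_iff)

lemma ed_inj: "ed (i mod k) = ed (j mod k) \<Longrightarrow> i mod k = j mod k"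
proof -
  assume h: "ed (i mod k) = ed (j mod k)"
  then have "{v i, v (Suc i)} = {v j, v (Suc j)}" using ends_ed by metis
  then consider "v i = v j" | "v i = v (Suc j) \<and> v (Suc i) = v j" by (auto simp: doubleton_eq_iff)
  then show ?thesis
  proof cases
    case 1 then show ?thesis using v_eq by simp
  next
    case 2
    then have "i mod k = Suc j mod k" "Suc i mod k = j mod k" using v_eq by auto
    then have "Suc (Suc j) mod k = j mod k" by (metis mod_Suc_eq)
    then have "(j + 2) mod k = (j + 0) mod k" by simp
    then have "2 mod k = 0 mod k" by (rule add_mod_cancel)
    then show ?thesis using k3 by simp
  qed
qed

lemma fa_eq: "fa i = fa j \<longleftrightarrow> i mod k = j mod k"
proof
  assume "fa i = fa j" then show "i mod k = j mod k" using ed_inj unfolding fa_def by simp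
next
  assume h: "i mod k = j mod k"
  then have "v i = v j" using v_eq by simp
  then show "fa i = fa j" unfolding fa_def using h by simp
qed

lemma ba_eq: "ba i = ba j \<longleftrightarrow> i mod k = j mod k"
proof
  assume "ba i = ba j" then show "i mod k = j mod k" using ed_inj unfolding ba_def by simp
next
  assume h: "i mod k = j mod k"
  then have "v i = v j" using v_eq by simp
  then show "ba i = ba j" unfolding ba_def using h by simp
qed

lemma fa_ne_ba: "fa i \<noteq> ba j"
proof
  assume h: "fa i = ba j"
  then have "i mod k = j mod k" using ed_inj unfolding fa_def ba_def by simp
  then have "v i = v j" using v_eq by simp
  then show False using h unfolding fa_def ba_def by auto
qed

definition fw :: "nat \<Rightarrow> nat \<Rightarrow> ('e \<times> bool) list" where
  "fw i n = map (\<lambda>j. fa (i + j)) [0..<n]"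
definition bw :: "nat \<Rightarrow> nat \<Rightarrow> ('e \<times> bool) list" where
  "bw i n = map (\<lambda>j. ba (i + k - 1 - j)) [0..<n]"

lemma set_fw: "set (fw i n) = {fa (i+j) | j. j < n}" unfolding fw_def by auto
lemma set_bw: "set (bw i n) = {ba (i+k-1-j) | j. j < n}" unfolding bw_def by auto

lemma mod_inj_small:
  assumes "(b + x) mod k = (b + y) mod k" "x < k" "y < k" shows "x = y"
proof -
  have "x mod k = y mod k" using assms(1) by (rule add_mod_cancel)
  then show ?thesis using assms by simp
qed

lemma fw_route:
  assumes "0 < n" "n < k"
  shows "is_route E ends (v i) (v (i + n)) (fw i n)"
proof -
  have "is_route E ends ((\<lambda>j. v (i + j)) 0) ((\<lambda>j. v (i + j)) (length (fw i n))) (fw i n)"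
  proof (rule route_by_vtx)
    show "fw i n \<noteq> []" using assms unfolding fw_def by simp
    show "\<forall>a\<in>set (fw i n). fst a \<in> E" using fa_E unfolding fw_def by auto
    show "arc_tail ends (fw i n ! l) = v (i + l)" if "l < length (fw i n)" for l
      using that fa_tail unfolding fw_def by simp
    show "arc_head ends (fw i n ! l) = v (i + Suc l)" if "l < length (fw i n)" for l
      using that fa_head unfolding fw_def by simp
    show "inj_on (\<lambda>j. v (i + j)) {0..length (fw i n)}"
    proof (rule inj_onI)
      fix x y assume x: "x \<in> {0..length (fw i n)}" and y: "y \<in> {0..length (fw i n)}"
        and e: "v (i + x) = v (i + y)"
      have "(i + x) mod k = (i + y) mod k" using e by (simp only: v_eq)
      moreover have "x < k" "y < k" using x y assms unfolding fw_def by auto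
      ultimately show "x = y" by (rule mod_inj_small)
    qed
  qed
  then show ?thesis unfolding fw_def by simp
qed

lemma bw_route:
  assumes "0 < n" "n < k"
  shows "is_route E ends (v i) (v (i + k - n)) (bw i n)"
proof -
  have "is_route E ends ((\<lambda>j. v (i + k - j)) 0) ((\<lambda>j. v (i + k - j)) (length (bw i n))) (bw i n)"
  proof (rule route_by_vtx)
    show "bw i n \<noteq> []" using assms unfolding bw_def by simp
    show "\<forall>a\<in>set (bw i n). fst a \<in> E" using ba_E unfolding bw_def by auto
    show "arc_tail ends (bw i n ! l) = v (i + k - l)" if "l < length (bw i n)" for l
    proof -
      have "Suc (i + k - 1 - l) = i + k - l" using that assms unfolding bw_def by simp
      then show ?thesis using that ba_tail unfolding bw_def by simp
    qed
    show "arc_head ends (bw i n ! l) = v (i + k - Suc l)" if "l < length (bw i n)" for l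
      using that ba_head unfolding bw_def by simp
    show "inj_on (\<lambda>j. v (i + k - j)) {0..length (bw i n)}"
    proof (rule inj_onI)
      fix x y assume x: "x \<in> {0..length (bw i n)}" and y: "y \<in> {0..length (bw i n)}"
        and e: "v (i + k - x) = v (i + k - y)"
      have "i + k - x = (i + k - n) + (n - x) \<and> i + k - y = (i + k - n) + (n - y)"
        using x y assms unfolding bw_def by auto
      moreover have "(i + k - x) mod k = (i + k - y) mod k" using e by (simp only: v_eq)
      ultimately have "(i + k - n + (n - x)) mod k = (i + k - n + (n - y)) mod k" by simp
      moreover have "n - x < k" "n - y < k" using assms by auto
      ultimately have "n - x = n - y" by (rule mod_inj_small)
      then show "x = y" using x y unfolding bw_def by simp
    qed
  qed
  then show ?thesis unfolding bw_def by simp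
qed

end


context cyc begin

lemma one_mod[simp]: "1 mod k = 1" and two_mod[simp]: "2 mod k = 2" using k3 by auto

lemma mem_fa_fw: "p < k \<Longrightarrow> fa p \<in> set (fw i n) \<longleftrightarrow> (\<exists>j<n. p = (i+j) mod k)"
  unfolding set_fw using fa_eq by auto

lemma mem_ba_bw: "p < k \<Longrightarrow> ba p \<in> set (bw i n) \<longleftrightarrow> (\<exists>j<n. p = (i+k-1-j) mod k)"
  unfolding set_bw using ba_eq by auto

lemma fa_nbw: "fa p \<notin> set (bw i n)" unfolding set_bw using fa_ne_ba by auto
lemma ba_nfw: "ba p \<notin> set (fw i n)" unfolding set_fw using fa_ne_ba[THEN not_sym] by auto

definition "A1 = fw 0 2"
definition "A2 = bw 0 (k-2)"
definition "B1 = bw 0 (k-1)"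
definition "B2 = fw 0 1"
definition "C1 = fw 2 (k-1)"
definition "C2 = bw 2 1"

lemma fa_A1: assumes p: "p < k" shows "fa p \<in> set A1 \<longleftrightarrow> p \<le> 1"
proof -
  have jm: "j < 2 \<Longrightarrow> j mod k = j" for j using k3 by simp
  have "(\<exists>j<2. p = (0+j) mod k) \<longleftrightarrow> p \<le> 1"
  proof
    assume "\<exists>j<2. p = (0+j) mod k"
    then obtain j where "j < 2" "p = j mod k" by auto
    then show "p \<le> 1" using jm by simp
  next
    assume "p \<le> 1"
    then show "\<exists>j<2. p = (0+j) mod k" using jm[of p] by (intro exI[of _ p]) auto
  qed
  then show ?thesis unfolding A1_def mem_fa_fw[OF p] .
qed

lemma fa_B2: "p < k \<Longrightarrow> fa p \<in> set B2 \<longleftrightarrow> p = 0"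
  unfolding B2_def mem_fa_fw by auto

lemma fa_C1: assumes p: "p < k" shows "fa p \<in> set C1 \<longleftrightarrow> p \<noteq> 1"
proof -
  have "(\<exists>j<k-1. p = (2+j) mod k) \<longleftrightarrow> p \<noteq> 1"
  proof
    assume "\<exists>j<k-1. p = (2+j) mod k"
    then obtain j where j: "j < k-1" "p = (2+j) mod k" by blast
    show "p \<noteq> 1"
    proof (cases "2 + j < k")
      case True then show ?thesis using j by simp
    next
      case False then have "2 + j = k" using j by simp
      then show ?thesis using j by simp
    qed
  next
    assume h: "p \<noteq> 1"
    show "\<exists>j<k-1. p = (2+j) mod k"
    proof (cases "p = 0")
      case True
      have "2 + (k-2) = k" using k3 by simp
      then have "(2 + (k-2)) mod k = 0" by simp
      then show ?thesis using True k3 by (intro exI[of _ "k-2"]) auto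
    next
      case False
      then have "2 \<le> p" using h by simp
      then show ?thesis using p by (intro exI[of _ "p-2"]) auto
    qed
  qed
  then show ?thesis unfolding C1_def mem_fa_fw[OF p] .
qed

lemma ba_A2: assumes p: "p < k" shows "ba p \<in> set A2 \<longleftrightarrow> 2 \<le> p"
proof -
  have "(\<exists>j<k-2. p = (0+k-1-j) mod k) \<longleftrightarrow> 2 \<le> p"
  proof
    assume "\<exists>j<k-2. p = (0+k-1-j) mod k"
    then obtain j where j: "j < k-2" "p = (k-1-j) mod k" by auto
    then have "p = k-1-j" using k3 by simp
    then show "2 \<le> p" using j by simp
  next
    assume h: "2 \<le> p"
    have "(0 + k - 1 - (k-1-p)) mod k = p" using p by simp
    then show "\<exists>j<k-2. p = (0+k-1-j) mod k" using h p by (intro exI[of _ "k-1-p"]) auto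
  qed
  then show ?thesis unfolding A2_def mem_ba_bw[OF p] .
qed

lemma ba_B1: assumes p: "p < k" shows "ba p \<in> set B1 \<longleftrightarrow> 1 \<le> p"
proof -
  have "(\<exists>j<k-1. p = (0+k-1-j) mod k) \<longleftrightarrow> 1 \<le> p"
  proof
    assume "\<exists>j<k-1. p = (0+k-1-j) mod k"
    then obtain j where j: "j < k-1" "p = (k-1-j) mod k" by auto
    then have "p = k-1-j" using k3 by simp
    then show "1 \<le> p" using j by simp
  next
    assume h: "1 \<le> p"
    have "(0 + k - 1 - (k-1-p)) mod k = p" using p by simp
    then show "\<exists>j<k-1. p = (0+k-1-j) mod k" using h p by (intro exI[of _ "k-1-p"]) auto
  qed
  then show ?thesis unfolding B1_def mem_ba_bw[OF p] .
qed

lemma ba_C2: assumes p: "p < k" shows "ba p \<in> set C2 \<longleftrightarrow> p = 1"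
proof -
  have "2 + k - 1 - 0 = 1 + k" by simp
  moreover have "(1 + k) mod k = 1" by (simp only: mod_add_self2 one_mod)
  ultimately have "(2 + k - 1 - 0) mod k = 1" by metis
  then have "(\<exists>j<1. p = (2+k-1-j) mod k) \<longleftrightarrow> p = 1" by auto
  then show ?thesis unfolding C2_def mem_ba_bw[OF p] .
qed

lemma route_sets: "set A1 \<union> set A2 \<union> set B1 \<union> set B2 \<union> set C1 \<union> set C2 \<subseteq> range fa \<union> range ba"
  unfolding A1_def A2_def B1_def B2_def C1_def C2_def set_fw set_bw by auto

definition sig1 :: "real \<Rightarrow> ('e \<times> bool) list" where
  "sig1 u = (if u \<le> 2 then A1 else if u \<le> 5 then B1 else C1)"
definition sig2 :: "real \<Rightarrow> ('e \<times> bool) list" where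
  "sig2 u = (if u \<le> 2 then A2 else if u \<le> 5 then B2 else C2)"

lemma fl1_fa: "p < k \<Longrightarrow> flow {0..7} sig1 (fa p) = (if p = 0 then 4 else 2)"
  unfolding sig1_def flow3 using fa_A1 fa_C1 fa_nbw[of p] unfolding B1_def by auto
lemma fl1_ba: "p < k \<Longrightarrow> flow {0..7} sig1 (ba p) = (if p = 0 then 0 else 3)"
  unfolding sig1_def flow3 using ba_B1 ba_nfw[of p] unfolding A1_def C1_def by auto
lemma fl2_fa: "p < k \<Longrightarrow> flow {0..7} sig2 (fa p) = (if p = 0 then 3 else 0)"
  unfolding sig2_def flow3 using fa_B2 fa_nbw[of p] unfolding A2_def C2_def by auto
lemma fl2_ba: "p < k \<Longrightarrow> flow {0..7} sig2 (ba p) = (if p = 0 then 0 else 2)"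
  unfolding sig2_def flow3 using ba_A2 ba_C2 ba_nfw[of p] unfolding B2_def by auto
lemma fl1_oth: "a \<notin> range fa \<Longrightarrow> a \<notin> range ba \<Longrightarrow> flow {0..7} sig1 a = 0"
  unfolding sig1_def flow3 using route_sets by auto
lemma fl2_oth: "a \<notin> range fa \<Longrightarrow> a \<notin> range ba \<Longrightarrow> flow {0..7} sig2 a = 0"
  unfolding sig2_def flow3 using route_sets by auto


definition cls :: "'e \<times> bool \<Rightarrow> nat" where
  "cls a = (if a = fa 0 then 0 else if a = fa 1 then 1 else if a \<in> range fa then 2
     else if a = ba 0 then 3 else if a = ba 1 then 4 else if a \<in> range ba then 5 else 6)"

lemma cls_fa: "p < k \<Longrightarrow> cls (fa p) = (if p = 0 then 0 else if p = 1 then 1 else 2)"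
  unfolding cls_def using fa_eq fa_ne_ba by auto

lemma cls_ba: "p < k \<Longrightarrow> cls (ba p) = (if p = 0 then 3 else if p = 1 then 4 else 5)"
  unfolding cls_def using ba_eq fa_ne_ba[THEN not_sym] by auto

lemma cls_oth: "a \<notin> range fa \<Longrightarrow> a \<notin> range ba \<Longrightarrow> cls a = 6"
  unfolding cls_def by auto

lemma cls_le: "cls a \<le> 6" unfolding cls_def by auto

definition wt :: "nat \<Rightarrow> nat \<Rightarrow> real" where
  "wt g cl = (if g = 0 then [6,1,1,1,1,9] ! cl else if g = 1 then [0,1,1,1,4,5] ! cl
     else [6,1,1,1,9,1] ! cl)"
definition qd :: "nat \<Rightarrow> nat \<Rightarrow> real" where
  "qd g cl = (if g = 1 \<and> cl = 0 then 2 else 0)"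
definition cost :: "nat \<Rightarrow> nat \<Rightarrow> real \<Rightarrow> real" where
  "cost g cl x = (if cl = 6 then 100 + x else if cl = 2 \<or> cl = 5 then wt g cl * x / (real k - 2)
     else wt g cl * x + qd g cl * x^2)"
definition grp :: "real \<Rightarrow> nat" where
  "grp u = (if u \<le> 2 then 0 else if u \<le> 5 then 1 else 2)"
definition cc :: "real \<Rightarrow> 'e \<times> bool \<Rightarrow> real \<Rightarrow> real" where
  "cc u a x = cost (grp u) (cls a) x"

lemma km2: "real k - 2 > 0" using k3 by simp

lemma wt_props: "g \<le> 2 \<Longrightarrow> cl \<le> 5 \<Longrightarrow> 0 \<le> wt g cl \<and> 0 \<le> qd g cl \<and> 0 < wt g cl + qd g cl"
proof -
  assume "g \<le> 2" "cl \<le> 5"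
  then have "g \<in> {0,1,2}" "cl \<in> {0,1,2,3,4,5}" by auto
  then show ?thesis unfolding wt_def qd_def by auto
qed

lemma lq_smono:
  fixes w q :: real
  assumes "0 \<le> w" "0 \<le> q" "0 < w + q"
  shows "strict_mono_on {0..} (\<lambda>x. w * x + q * x^2)"
proof (rule strict_mono_onI)
  fix x y :: real assume x: "x \<in> {0..}" and y: "y \<in> {0..}" and xy: "x < y"
  have "x^2 \<le> y^2" using x xy by (simp add: power_mono)
  have "x^2 < y^2" using x xy by (simp add: power_strict_mono)
  show "w * x + q * x^2 < w * y + q * y^2"
  proof (cases "w > 0")
    case True
    then have "w * x < w * y" using xy by simp
    moreover have "q * x^2 \<le> q * y^2" using assms \<open>x^2 \<le> y^2\<close> by (simp add: mult_left_mono)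
    ultimately show ?thesis by simp
  next
    case False
    then have "w = 0" "q > 0" using assms by auto
    then show ?thesis using \<open>x^2 < y^2\<close> by simp
  qed
qed

lemma cost_smono: "g \<le> 2 \<Longrightarrow> cl \<le> 6 \<Longrightarrow> strict_mono_on {0..} (cost g cl)"
proof -
  assume g: "g \<le> 2" and cl: "cl \<le> 6"
  show ?thesis
  proof (cases "cl = 6")
    case True
    then show ?thesis unfolding cost_def by (auto intro: strict_mono_onI)
  next
    case False
    then have cl5: "cl \<le> 5" using cl by simp
    show ?thesis
    proof (cases "cl = 2 \<or> cl = 5")
      case True
      have "wt g cl > 0" using wt_props[OF g cl5] True unfolding qd_def by auto
      then show ?thesis using True km2 unfolding cost_def
        by (auto intro!: strict_mono_onI divide_strict_right_mono)
    next
      case F2: False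
      have "strict_mono_on {0..} (\<lambda>x. wt g cl * x + qd g cl * x^2)"
        using wt_props[OF g cl5] by (intro lq_smono) auto
      then show ?thesis using F2 False unfolding cost_def by simp
    qed
  qed
qed

lemma cost_nonneg: "g \<le> 2 \<Longrightarrow> cl \<le> 6 \<Longrightarrow> 0 \<le> x \<Longrightarrow> 0 \<le> cost g cl x"
proof -
  assume g: "g \<le> 2" and cl: "cl \<le> 6" and x: "0 \<le> x"
  show ?thesis
  proof (cases "cl = 6")
    case False
    then have cl5: "cl \<le> 5" using cl by simp
    then show ?thesis using wt_props[OF g cl5] x km2 unfolding cost_def by auto
  qed (use x in \<open>simp add: cost_def\<close>)
qed

lemma cost_cont: "continuous_on {0..} (cost g cl)"
  unfolding cost_def using km2
  by (cases "cl = 6"; cases "cl = 2 \<or> cl = 5") (auto intro!: continuous_intros)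

lemma grp_le: "grp u \<le> 2" unfolding grp_def by auto

lemma valid_cc: "valid_costs E {0..7} cc"
proof -
  have 1: "continuous_on {0..} (cc u a) \<and> strict_mono_on {0..} (cc u a) \<and> (\<forall>x\<ge>0. 0 \<le> cc u a x)"
    for u a
    unfolding cc_def using cost_cont cost_smono cost_nonneg grp_le cls_le by simp
  have 2: "set_borel_measurable lebesgue {0..7} (\<lambda>u. cc u a x)" for a x
  proof -
    have "(\<lambda>u. cc u a x) = (\<lambda>u. if u \<le> 2 then cost 0 (cls a) x else if u \<le> 5 then cost 1 (cls a) x
       else cost 2 (cls a) x)"
      unfolding cc_def grp_def by auto
    then show ?thesis using piece_meas by simp
  qed
  show ?thesis unfolding valid_costs_def using 1 2 by blast
qed


definition pos :: "'v \<Rightarrow> nat" where "pos x = (THE p. p < k \<and> vs ! p = x)"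
definition Phi :: "real \<Rightarrow> real \<Rightarrow> real \<Rightarrow> nat \<Rightarrow> real" where
  "Phi d0 d1 d2 p = (if p = 0 then d0 else if p = 1 then d1
     else d0 + (real k - real p) / (real k - 2) * (d2 - d0))"
definition phi :: "real \<Rightarrow> real \<Rightarrow> real \<Rightarrow> 'v \<Rightarrow> real" where
  "phi d0 d1 d2 x = (if x \<in> set vs then Phi d0 d1 d2 (pos x) else 0)"

lemma pos_nth: "p < k \<Longrightarrow> pos (vs ! p) = p"
  unfolding pos_def
proof (rule the_equality)
  fix q assume "p < k" "q < k \<and> vs ! q = vs ! p"
  then show "q = p" using dvs by (metis nth_eq_iff_index_eq)
qed simp

lemma pos_lt: "x \<in> set vs \<Longrightarrow> pos x < k"
proof -
  assume "x \<in> set vs"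
  then obtain p where "p < k" "vs ! p = x" by (meson in_set_conv_nth)
  then show ?thesis using pos_nth by auto
qed

lemma phi_v: "phi d0 d1 d2 (v i) = Phi d0 d1 d2 (i mod k)"
  unfolding phi_def using v_in pos_nth kpos unfolding v_def by simp

lemma Phi0: "Phi d0 d1 d2 0 = d0" and Phi1: "Phi d0 d1 d2 1 = d1"
  unfolding Phi_def by auto

lemma Phi2: "Phi d0 d1 d2 2 = d2"
  unfolding Phi_def using km2 by simp

lemma aux_step1: "(m::real) \<noteq> 0 \<Longrightarrow> (x + (a - 1) / m * D) - (x + a / m * D) = (- D) / m"
  by (simp add: field_simps)
lemma aux_step2: "(m::real) \<noteq> 0 \<Longrightarrow> x - (x + 1 / m * (y - x)) = (x - y) / m"
  by (simp add: field_simps)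

lemma Phi_step:
  assumes "2 \<le> p" "p < k"
  shows "Phi d0 d1 d2 (Suc p mod k) - Phi d0 d1 d2 p = (d0 - d2) / (real k - 2)"
proof (cases "Suc p < k")
  case True
  then have "Suc p mod k = Suc p" by simp
  moreover have "Phi d0 d1 d2 (Suc p) = d0 + ((real k - real p) - 1) / (real k - 2) * (d2 - d0)"
    using assms unfolding Phi_def by simp
  moreover have "Phi d0 d1 d2 p = d0 + (real k - real p) / (real k - 2) * (d2 - d0)"
    using assms unfolding Phi_def by simp
  ultimately show ?thesis using aux_step1[of "real k - 2" d0 "real k - real p" "d2 - d0"] km2
    by simp
next
  case False
  then have "Suc p = k" using assms by simp
  then have "Suc p mod k = 0" "real k - real p = 1" by auto
  moreover have "Phi d0 d1 d2 p = d0 + (real k - real p) / (real k - 2) * (d2 - d0)"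
    using assms unfolding Phi_def by simp
  ultimately show ?thesis using aux_step2[of "real k - 2" d0 d2] km2 Phi0 by simp
qed

lemma Phi_bnd:
  assumes d: "0 \<le> d0" "d0 \<le> 27" "0 \<le> d1" "d1 \<le> 27" "0 \<le> d2" "d2 \<le> 27" and p: "p < k"
  shows "0 \<le> Phi d0 d1 d2 p \<and> Phi d0 d1 d2 p \<le> 27"
proof (cases "p \<le> 1")
  case True then show ?thesis using d unfolding Phi_def by auto
next
  case False
  define l where "l = (real k - real p) / (real k - 2)"
  have l0: "0 \<le> l" unfolding l_def using p km2 by simp
  have l1: "l \<le> 1" unfolding l_def using p km2 False by (simp add: divide_le_eq_1)
  have "Phi d0 d1 d2 p = d0 + l * (d2 - d0)" unfolding Phi_def l_def using False by simp
  then have e: "Phi d0 d1 d2 p = (1 - l) * d0 + l * d2" by (simp add: algebra_simps)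
  have "(1 - l) * d0 \<le> (1 - l) * 27" using l1 d by (intro mult_left_mono) auto
  moreover have "l * d2 \<le> l * 27" using l0 d by (intro mult_left_mono) auto
  moreover have "0 \<le> (1 - l) * d0" "0 \<le> l * d2" using l0 l1 d by simp_all
  ultimately show ?thesis using e by (simp add: algebra_simps)
qed

lemma phi_bnd:
  assumes "0 \<le> d0" "d0 \<le> 27" "0 \<le> d1" "d1 \<le> 27" "0 \<le> d2" "d2 \<le> 27"
  shows "0 \<le> phi d0 d1 d2 x \<and> phi d0 d1 d2 x \<le> 27"
  unfolding phi_def using Phi_bnd[OF assms pos_lt] by auto

lemma pot_ok:
  assumes d: "0 \<le> d0" "d0 \<le> 27" "0 \<le> d1" "d1 \<le> 27" "0 \<le> d2" "d2 \<le> 27"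
    and h01: "w (fa 0) \<ge> d1 - d0" and h10: "w (ba 0) \<ge> d0 - d1"
    and h12: "w (fa 1) \<ge> d2 - d1" and h21: "w (ba 1) \<ge> d1 - d2"
    and h20: "\<And>p. 2 \<le> p \<Longrightarrow> p < k \<Longrightarrow> w (fa p) * (real k - 2) \<ge> d0 - d2"
    and h02: "\<And>p. 2 \<le> p \<Longrightarrow> p < k \<Longrightarrow> w (ba p) * (real k - 2) \<ge> d2 - d0"
    and hoth: "\<And>a. fst a \<in> E \<Longrightarrow> a \<notin> range fa \<Longrightarrow> a \<notin> range ba \<Longrightarrow> w a \<ge> 100"
    and a: "fst a \<in> E"
  shows "w a \<ge> phi d0 d1 d2 (arc_head ends a) - phi d0 d1 d2 (arc_tail ends a)"
proof -
  consider (F) q where "a = fa q" | (B) q where "a = ba q" | (O) "a \<notin> range fa" "a \<notin> range ba"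
    by blast
  then show ?thesis
  proof cases
    case F
    define p where "p = q mod k"
    have ap: "a = fa p" using F fa_eq unfolding p_def by simp
    have p: "p < k" unfolding p_def using kpos by simp
    have hd: "phi d0 d1 d2 (arc_head ends a) = Phi d0 d1 d2 (Suc p mod k)"
      using ap fa_head phi_v by simp
    have tl: "phi d0 d1 d2 (arc_tail ends a) = Phi d0 d1 d2 p"
      using ap fa_tail phi_v p by simp
    consider "p = 0" | "p = 1" | "2 \<le> p" by linarith
    then show ?thesis
    proof cases
      case 1 then show ?thesis using hd tl ap h01 k3 Phi0 Phi1 by simp
    next
      case 2
      have "Suc p mod k = 2" using 2 k3 by simp
      then show ?thesis using hd tl ap h12 2 Phi1 Phi2 by simp
    next
      case 3
      have "w (fa p) \<ge> (d0 - d2) / (real k - 2)" using h20[OF 3 p] km2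
        by (simp add: divide_le_eq)
      then show ?thesis using hd tl ap Phi_step[OF 3 p] by simp
    qed
  next
    case B
    define p where "p = q mod k"
    have ap: "a = ba p" using B ba_eq unfolding p_def by simp
    have p: "p < k" unfolding p_def using kpos by simp
    have tl: "phi d0 d1 d2 (arc_tail ends a) = Phi d0 d1 d2 (Suc p mod k)"
      using ap ba_tail phi_v by simp
    have hd: "phi d0 d1 d2 (arc_head ends a) = Phi d0 d1 d2 p"
      using ap ba_head phi_v p by simp
    consider "p = 0" | "p = 1" | "2 \<le> p" by linarith
    then show ?thesis
    proof cases
      case 1 then show ?thesis using hd tl ap h10 k3 Phi0 Phi1 by simp
    next
      case 2
      have "Suc p mod k = 2" using 2 k3 by simp
      then show ?thesis using hd tl ap h21 2 Phi1 Phi2 by simp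
    next
      case 3
      have "w (ba p) \<ge> (d2 - d0) / (real k - 2)" using h02[OF 3 p] km2
        by (simp add: divide_le_eq)
      moreover have "(d2 - d0) / (real k - 2) = - ((d0 - d2) / (real k - 2))"
        by (metis minus_diff_eq minus_divide_left)
      ultimately have "w (ba p) \<ge> Phi d0 d1 d2 p - Phi d0 d1 d2 (Suc p mod k)"
        using Phi_step[OF 3 p, of d0 d1 d2] by linarith
      then show ?thesis using hd tl ap by simp
    qed
  next
    case O
    have "w a \<ge> 100" using hoth[OF a O] .
    moreover have "phi d0 d1 d2 (arc_head ends a) \<le> 27" "0 \<le> phi d0 d1 d2 (arc_tail ends a)"
      using phi_bnd[OF d] by auto
    ultimately show ?thesis by simp
  qed
qed

end


lemma sum_const_list: "(\<And>x. x \<in> set xs \<Longrightarrow> f x = (K::real)) \<Longrightarrow> sum_list (map f xs) = real (length xs) * K"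
  by (induction xs) (auto simp: algebra_simps)

context cyc begin

lemma wv_fa: "p < k \<Longrightarrow> cost g (cls (fa p)) x = (if p = 0 then wt g 0 * x + qd g 0 * x^2
   else if p = 1 then wt g 1 * x + qd g 1 * x^2 else wt g 2 * x / (real k - 2))"
  using cls_fa[of p] unfolding cost_def by auto

lemma wv_ba: "p < k \<Longrightarrow> cost g (cls (ba p)) x = (if p = 0 then wt g 3 * x + qd g 3 * x^2
   else if p = 1 then wt g 4 * x + qd g 4 * x^2 else wt g 5 * x / (real k - 2))"
  using cls_ba[of p] unfolding cost_def by auto

lemma wv_oth: "a \<notin> range fa \<Longrightarrow> a \<notin> range ba \<Longrightarrow> cost g (cls a) x = 100 + x"
  using cls_oth unfolding cost_def by auto

definition odf :: "real \<Rightarrow> 'v \<times> 'v" where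
  "odf u = (if u \<le> 2 then (v 0, v 2) else if u \<le> 5 then (v 0, v 1) else (v 2, v 1))"

lemma v_k1: "v (2 + (k - 1)) = v 1" "v (2 + k - 1) = v 1"
proof -
  have "2 + (k - 1) = 1 + k" "2 + k - 1 = 1 + k" using k3 by auto
  moreover have "v (1 + k) = v 1" by (rule v_add_k)
  ultimately show "v (2 + (k - 1)) = v 1" "v (2 + k - 1) = v 1" by metis+
qed

lemma rA1: "is_route E ends (v 0) (v 2) A1"
proof -
  have "is_route E ends (v 0) (v (0+2)) (fw 0 2)" by (rule fw_route) (use k3 in auto)
  then show ?thesis unfolding A1_def by (simp only: add_0_left)
qed
lemma rA2: "is_route E ends (v 0) (v 2) A2"
proof -
  have "0 + k - (k - 2) = 2" using k3 by simp
  then show ?thesis unfolding A2_def using bw_route[of "k-2" 0] k3 by simp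
qed
lemma rB1: "is_route E ends (v 0) (v 1) B1"
proof -
  have "0 + k - (k - 1) = 1" using k3 by simp
  then show ?thesis unfolding B1_def using bw_route[of "k-1" 0] k3 by simp
qed
lemma rB2: "is_route E ends (v 0) (v 1) B2"
proof -
  have "is_route E ends (v 0) (v (0+1)) (fw 0 1)" by (rule fw_route) (use k3 in auto)
  then show ?thesis unfolding B2_def by (simp only: add_0_left)
qed
lemma rC1: "is_route E ends (v 2) (v 1) C1"
  unfolding C1_def using fw_route[of "k-1" 2] k3 v_k1 by simp
lemma rC2: "is_route E ends (v 2) (v 1) C2"
  unfolding C2_def using bw_route[of 1 2] k3 v_k1 by simp

lemma sp1: "strategy_profile E ends {0..7} odf sig1"
  unfolding strategy_profile_def
proof (intro conjI allI ballI)
  fix u assume "u \<in> {0..7::real}"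
  show "is_route E ends (fst (odf u)) (snd (odf u)) (sig1 u)"
    unfolding odf_def sig1_def using rA1 rB1 rC1 by auto
next
  fix P show "{u \<in> {0..7}. sig1 u = P} \<in> sets lebesgue" unfolding sig1_def by (rule piece_sets)
qed

lemma sp2: "strategy_profile E ends {0..7} odf sig2"
  unfolding strategy_profile_def
proof (intro conjI allI ballI)
  fix u assume "u \<in> {0..7::real}"
  show "is_route E ends (fst (odf u)) (snd (odf u)) (sig2 u)"
    unfolding odf_def sig2_def using rA2 rB2 rC2 by auto
next
  fix P show "{u \<in> {0..7}. sig2 u = P} \<in> sets lebesgue" unfolding sig2_def by (rule piece_sets)
qed

lemma eq_generic:
  assumes d: "0 \<le> da" "da \<le> 27" "0 \<le> db" "db \<le> 27" "0 \<le> dc" "dc \<le> 27"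
    and w_def: "w = (\<lambda>a. cost g (cls a) (flow {0..7} \<sigma> a))"
    and h01: "w (fa 0) \<ge> db - da" and h10: "w (ba 0) \<ge> da - db"
    and h12: "w (fa 1) \<ge> dc - db" and h21: "w (ba 1) \<ge> db - dc"
    and h20: "\<And>p. 2 \<le> p \<Longrightarrow> p < k \<Longrightarrow> w (fa p) * (real k - 2) \<ge> da - dc"
    and h02: "\<And>p. 2 \<le> p \<Longrightarrow> p < k \<Longrightarrow> w (ba p) * (real k - 2) \<ge> dc - da"
    and oth0: "\<And>a. a \<notin> range fa \<Longrightarrow> a \<notin> range ba \<Longrightarrow> flow {0..7} \<sigma> a = 0"
    and P0: "sum_list (map w P0) = phi da db dc t - phi da db dc s"
    and P: "is_route E ends s t P"
  shows "sum_list (map w P0) \<le> sum_list (map w P)"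
proof -
  have "\<And>a. fst a \<in> E \<Longrightarrow> w a \<ge> phi da db dc (arc_head ends a) - phi da db dc (arc_tail ends a)"
  proof (rule pot_ok[OF d h01 h10 h12 h21 h20 h02])
    fix a assume "a \<notin> range fa" "a \<notin> range ba"
    then show "w a \<ge> 100" unfolding w_def using wv_oth oth0 by simp
  qed
  then have "sum_list (map w P) \<ge> phi da db dc t - phi da db dc s" by (rule route_pot[OF P])
  then show ?thesis using P0 by simp
qed


lemma w1_fa: "p < k \<Longrightarrow> cost g (cls (fa p)) (flow {0..7} sig1 (fa p)) =
  (if p = 0 then wt g 0 * 4 + qd g 0 * 16 else if p = 1 then wt g 1 * 2 + qd g 1 * 4
   else wt g 2 * 2 / (real k - 2))"
  using wv_fa fl1_fa by simp
lemma w1_ba: "p < k \<Longrightarrow> cost g (cls (ba p)) (flow {0..7} sig1 (ba p)) =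
  (if p = 0 then 0 else if p = 1 then wt g 4 * 3 + qd g 4 * 9
   else wt g 5 * 3 / (real k - 2))"
  using wv_ba fl1_ba by simp
lemma w2_fa: "p < k \<Longrightarrow> cost g (cls (fa p)) (flow {0..7} sig2 (fa p)) =
  (if p = 0 then wt g 0 * 3 + qd g 0 * 9 else 0)"
  using wv_fa fl2_fa by simp
lemma w2_ba: "p < k \<Longrightarrow> cost g (cls (ba p)) (flow {0..7} sig2 (ba p)) =
  (if p = 0 then 0 else if p = 1 then wt g 4 * 2 + qd g 4 * 4
   else wt g 5 * 2 / (real k - 2))"
  using wv_ba fl2_ba by simp

lemma A1_eq: "A1 = [fa 0, fa 1]" unfolding A1_def fw_def by (simp add: upt_rec)
lemma B2_eq: "B2 = [fa 0]" unfolding B2_def fw_def by simp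
lemma C2_eq: "C2 = [ba 1]"
proof -
  have e: "2 + k - 1 - 0 = 1 + k" by simp
  have "(1 + k) mod k = 1 mod k" by (simp only: mod_add_self2)
  then have "ba (2 + k - 1 - 0) = ba 1" unfolding e using ba_eq by blast
  then show ?thesis unfolding C2_def bw_def by simp
qed
lemma B1_eq: "B1 = bw 0 (k-2) @ [ba 1]"
proof -
  have "k - 1 = Suc (k - 2)" using k3 by simp
  moreover have "0 + k - 1 - (k - 2) = 1" using k3 by simp
  ultimately show ?thesis unfolding B1_def bw_def by simp
qed
lemma C1_eq: "C1 = fw 2 (k-2) @ [fa 0]"
proof -
  have "k - 1 = Suc (k - 2)" using k3 by simp
  moreover have "fa (2 + (k - 2)) = fa 0"
  proof -
    have "2 + (k - 2) = k" using k3 by simp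
    then show ?thesis using fa_eq by simp
  qed
  ultimately show ?thesis unfolding C1_def fw_def by simp
qed

lemma seg_bw: "(\<And>p. 2 \<le> p \<Longrightarrow> p < k \<Longrightarrow> w (ba p) = K) \<Longrightarrow>
    sum_list (map w (bw 0 (k-2))) = (real k - 2) * (K::real)"
proof -
  assume h: "\<And>p. 2 \<le> p \<Longrightarrow> p < k \<Longrightarrow> w (ba p) = K"
  have "sum_list (map w (bw 0 (k-2))) = real (length (bw 0 (k-2))) * K"
  proof (rule sum_const_list)
    fix x assume "x \<in> set (bw 0 (k-2))"
    then obtain j where j: "j < k - 2" "x = ba (0 + k - 1 - j)" unfolding set_bw by auto
    then show "w x = K" using h[of "0 + k - 1 - j"] by simp
  qed
  moreover have "real (length (bw 0 (k-2))) = real k - 2" using k3 unfolding bw_def by simp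
  ultimately show ?thesis by simp
qed

lemma seg_fw: "(\<And>p. 2 \<le> p \<Longrightarrow> p < k \<Longrightarrow> w (fa p) = K) \<Longrightarrow>
    sum_list (map w (fw 2 (k-2))) = (real k - 2) * (K::real)"
proof -
  assume h: "\<And>p. 2 \<le> p \<Longrightarrow> p < k \<Longrightarrow> w (fa p) = K"
  have "sum_list (map w (fw 2 (k-2))) = real (length (fw 2 (k-2))) * K"
  proof (rule sum_const_list)
    fix x assume "x \<in> set (fw 2 (k-2))"
    then obtain j where j: "j < k - 2" "x = fa (2 + j)" unfolding set_fw by auto
    then show "w x = K" using h[of "2 + j"] by simp
  qed
  moreover have "real (length (fw 2 (k-2))) = real k - 2" using k3 unfolding fw_def by simp
  ultimately show ?thesis by simp
qed

lemma phi_v012: "phi d0 d1 d2 (v 0) = d0" "phi d0 d1 d2 (v 1) = d1" "phi d0 d1 d2 (v 2) = d2"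
  by (simp_all only: phi_v one_mod two_mod Phi1 Phi2 mod_0 Phi0)

lemma cancel_km2: "(real k - 2) * (x / (real k - 2)) = x" using km2 by simp

lemma rc_eq: "route_cost {0..7} cc \<sigma> u Q = sum_list (map (\<lambda>a. cost (grp u) (cls a) (flow {0..7} \<sigma> a)) Q)"
  unfolding route_cost_def cc_def by simp

lemma E1A: assumes "is_route E ends (v 0) (v 2) P"
  shows "sum_list (map (\<lambda>a. cost 0 (cls a) (flow {0..7} sig1 a)) A1)
       \<le> sum_list (map (\<lambda>a. cost 0 (cls a) (flow {0..7} sig1 a)) P)"
proof (rule eq_generic[where da=0 and db=24 and dc=26, OF _ _ _ _ _ _ refl _ _ _ _ _ _ fl1_oth _ assms])
  show "sum_list (map (\<lambda>a. cost 0 (cls a) (flow {0..7} sig1 a)) A1) = phi 0 24 26 (v 2) - phi 0 24 26 (v 0)"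
    unfolding A1_eq using kpos k3 w1_fa[of 0 0] w1_fa[of 1 0] phi_v012 by (simp add: wt_def qd_def)
qed (use kpos k3 km2 in \<open>simp_all add: w1_fa w1_ba wt_def qd_def field_simps\<close>)

lemma E2A: assumes "is_route E ends (v 0) (v 2) P"
  shows "sum_list (map (\<lambda>a. cost 0 (cls a) (flow {0..7} sig2 a)) A2)
       \<le> sum_list (map (\<lambda>a. cost 0 (cls a) (flow {0..7} sig2 a)) P)"
proof (rule eq_generic[where da=0 and db=18 and dc=18, OF _ _ _ _ _ _ refl _ _ _ _ _ _ fl2_oth _ assms])
  show "sum_list (map (\<lambda>a. cost 0 (cls a) (flow {0..7} sig2 a)) A2) = phi 0 18 18 (v 2) - phi 0 18 18 (v 0)"
    proof -
    have "sum_list (map (\<lambda>a. cost 0 (cls a) (flow {0..7} sig2 a)) (bw 0 (k-2))) = (real k - 2) * (18 / (real k - 2))"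
      by (rule seg_bw) (simp add: w2_ba wt_def qd_def)
    then have X: "sum_list (map (\<lambda>a. cost 0 (cls a) (flow {0..7} sig2 a)) (bw 0 (k-2))) = 18" unfolding cancel_km2 .
    then show ?thesis unfolding A2_def using km2 phi_v012 by simp
  qed
qed (use kpos k3 km2 in \<open>simp_all add: w2_fa w2_ba wt_def qd_def field_simps\<close>)

lemma E1B: assumes "is_route E ends (v 0) (v 1) P"
  shows "sum_list (map (\<lambda>a. cost 1 (cls a) (flow {0..7} sig1 a)) B1)
       \<le> sum_list (map (\<lambda>a. cost 1 (cls a) (flow {0..7} sig1 a)) P)"
proof (rule eq_generic[where da=0 and db=27 and dc=15, OF _ _ _ _ _ _ refl _ _ _ _ _ _ fl1_oth _ assms])
  show "sum_list (map (\<lambda>a. cost 1 (cls a) (flow {0..7} sig1 a)) B1) = phi 0 27 15 (v 1) - phi 0 27 15 (v 0)"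
    proof -
    have "sum_list (map (\<lambda>a. cost 1 (cls a) (flow {0..7} sig1 a)) (bw 0 (k-2))) = (real k - 2) * (15 / (real k - 2))"
      by (rule seg_bw) (simp add: w1_ba wt_def qd_def)
    then have X: "sum_list (map (\<lambda>a. cost 1 (cls a) (flow {0..7} sig1 a)) (bw 0 (k-2))) = 15" unfolding cancel_km2 .
    then show ?thesis unfolding B1_eq using km2 phi_v012 kpos k3 w1_ba[of 1 1] by (simp add: wt_def qd_def)
  qed
qed (use kpos k3 km2 in \<open>simp_all add: w1_fa w1_ba wt_def qd_def field_simps\<close>)

lemma E2B: assumes "is_route E ends (v 0) (v 1) P"
  shows "sum_list (map (\<lambda>a. cost 1 (cls a) (flow {0..7} sig2 a)) B2)
       \<le> sum_list (map (\<lambda>a. cost 1 (cls a) (flow {0..7} sig2 a)) P)"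
proof (rule eq_generic[where da=0 and db=18 and dc=10, OF _ _ _ _ _ _ refl _ _ _ _ _ _ fl2_oth _ assms])
  show "sum_list (map (\<lambda>a. cost 1 (cls a) (flow {0..7} sig2 a)) B2) = phi 0 18 10 (v 1) - phi 0 18 10 (v 0)"
    unfolding B2_eq using kpos k3 w2_fa[of 0 1] phi_v012 by (simp add: wt_def qd_def)
qed (use kpos k3 km2 in \<open>simp_all add: w2_fa w2_ba wt_def qd_def field_simps\<close>)

lemma E1C: assumes "is_route E ends (v 2) (v 1) P"
  shows "sum_list (map (\<lambda>a. cost 2 (cls a) (flow {0..7} sig1 a)) C1)
       \<le> sum_list (map (\<lambda>a. cost 2 (cls a) (flow {0..7} sig1 a)) P)"
proof (rule eq_generic[where da=2 and db=26 and dc=0, OF _ _ _ _ _ _ refl _ _ _ _ _ _ fl1_oth _ assms])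
  show "sum_list (map (\<lambda>a. cost 2 (cls a) (flow {0..7} sig1 a)) C1) = phi 2 26 0 (v 1) - phi 2 26 0 (v 2)"
    proof -
    have "sum_list (map (\<lambda>a. cost 2 (cls a) (flow {0..7} sig1 a)) (fw 2 (k-2))) = (real k - 2) * (2 / (real k - 2))"
      by (rule seg_fw) (simp add: w1_fa wt_def qd_def)
    then have X: "sum_list (map (\<lambda>a. cost 2 (cls a) (flow {0..7} sig1 a)) (fw 2 (k-2))) = 2" unfolding cancel_km2 .
    then show ?thesis unfolding C1_eq using km2 phi_v012 kpos k3 w1_fa[of 0 2] by (simp add: wt_def qd_def)
  qed
qed (use kpos k3 km2 in \<open>simp_all add: w1_fa w1_ba wt_def qd_def field_simps\<close>)

lemma E2C: assumes "is_route E ends (v 2) (v 1) P"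
  shows "sum_list (map (\<lambda>a. cost 2 (cls a) (flow {0..7} sig2 a)) C2)
       \<le> sum_list (map (\<lambda>a. cost 2 (cls a) (flow {0..7} sig2 a)) P)"
proof (rule eq_generic[where da=0 and db=18 and dc=0, OF _ _ _ _ _ _ refl _ _ _ _ _ _ fl2_oth _ assms])
  show "sum_list (map (\<lambda>a. cost 2 (cls a) (flow {0..7} sig2 a)) C2) = phi 0 18 0 (v 1) - phi 0 18 0 (v 2)"
    unfolding C2_eq using kpos k3 w2_ba[of 1 2] phi_v012 by (simp add: wt_def qd_def)
qed (use kpos k3 km2 in \<open>simp_all add: w2_fa w2_ba wt_def qd_def field_simps\<close>)

lemma grp0: "u \<le> 2 \<Longrightarrow> grp u = 0" and grp1: "\<not> u \<le> 2 \<Longrightarrow> u \<le> 5 \<Longrightarrow> grp u = 1"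
  and grp2: "\<not> u \<le> 2 \<Longrightarrow> \<not> u \<le> 5 \<Longrightarrow> grp u = 2"
  unfolding grp_def by auto

lemma eq1: "equilibrium E ends {0..7} odf cc sig1"
  unfolding equilibrium_def
proof (intro conjI sp1 ballI allI impI)
  fix u :: real and P assume u: "u \<in> {0..7}" and P: "is_route E ends (fst (odf u)) (snd (odf u)) P"
  consider "u \<le> 2" | "\<not> u \<le> 2" "u \<le> 5" | "\<not> u \<le> 2" "\<not> u \<le> 5" by blast
  then show "route_cost {0..7} cc sig1 u (sig1 u) \<le> route_cost {0..7} cc sig1 u P"
  proof cases
    case 1 then show ?thesis using E1A[of P] P unfolding rc_eq odf_def sig1_def by (simp add: grp0)
  next
    case 2 then show ?thesis using E1B[of P] P unfolding rc_eq odf_def sig1_def by (simp add: grp1)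
  next
    case 3 then show ?thesis using E1C[of P] P unfolding rc_eq odf_def sig1_def by (simp add: grp2)
  qed
qed

lemma eq2: "equilibrium E ends {0..7} odf cc sig2"
  unfolding equilibrium_def
proof (intro conjI sp2 ballI allI impI)
  fix u :: real and P assume u: "u \<in> {0..7}" and P: "is_route E ends (fst (odf u)) (snd (odf u)) P"
  consider "u \<le> 2" | "\<not> u \<le> 2" "u \<le> 5" | "\<not> u \<le> 2" "\<not> u \<le> 5" by blast
  then show "route_cost {0..7} cc sig2 u (sig2 u) \<le> route_cost {0..7} cc sig2 u P"
  proof cases
    case 1 then show ?thesis using E2A[of P] P unfolding rc_eq odf_def sig2_def by (simp add: grp0)
  next
    case 2 then show ?thesis using E2B[of P] P unfolding rc_eq odf_def sig2_def by (simp add: grp1)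
  next
    case 3 then show ?thesis using E2C[of P] P unfolding rc_eq odf_def sig2_def by (simp add: grp2)
  qed
qed

lemma v012_ne: "v 0 \<noteq> v 1" "v 0 \<noteq> v 2" "v 1 \<noteq> v 2" "v 1 \<noteq> v 0" "v 2 \<noteq> v 0" "v 2 \<noteq> v 1"
  unfolding v_eq using k3 by auto

lemma demand: "demand_digraph V {v 0, v 1, v 2} {(v 0, v 2), (v 0, v 1), (v 2, v 1)}"
  unfolding demand_digraph_def using v_in vsV v012_ne by auto

lemma vod: "valid_od {(v 0, v 2), (v 0, v 1), (v 2, v 1)} {0..7} odf"
  unfolding valid_od_def
proof (intro conjI ballI)
  fix u :: real assume "u \<in> {0..7}"
  show "odf u \<in> {(v 0, v 2), (v 0, v 1), (v 2, v 1)}" unfolding odf_def by auto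
next
  fix p show "{u \<in> {0..7}. odf u = p} \<in> sets lebesgue" unfolding odf_def by (rule piece_sets)
qed

lemma not_unique: "\<not> uniqueness_property V E ends {v 0, v 1, v 2} {(v 0, v 2), (v 0, v 1), (v 2, v 1)}"
proof
  assume "uniqueness_property V E ends {v 0, v 1, v 2} {(v 0, v 2), (v 0, v 1), (v 2, v 1)}"
  then have "flow {0..7} sig1 (fa 1) = flow {0..7} sig2 (fa 1)"
    unfolding uniqueness_property_def using vod valid_cc eq1 eq2 fa_E by blast
  moreover have "flow {0..7} sig1 (fa 1) = 2" "flow {0..7} sig2 (fa 1) = 0"
    using fl1_fa[of 1] fl2_fa[of 1] k3 by auto
  ultimately show False by simp
qed

lemma not_strong: "\<not> strong_uniqueness V E ends"
  unfolding strong_uniqueness_def using demand not_unique by blast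

end

lemma dir2:
  assumes sg: "supply_graph V E ends" and hc: "has_long_cycle V E ends"
  shows "\<not> strong_uniqueness V E ends"
proof -
  obtain vs where vs: "distinct vs" "length vs \<ge> 3" "set vs \<subseteq> V"
    "\<forall>i<length vs. \<exists>e\<in>E. {fst (ends e), snd (ends e)} = {vs ! i, vs ! ((i + 1) mod length vs)}"
    using hc unfolding has_long_cycle_def by blast
  have "\<forall>i. \<exists>e. i < length vs \<longrightarrow> e \<in> E \<and> {fst (ends e), snd (ends e)} = {vs ! i, vs ! ((i + 1) mod length vs)}"
    using vs(4) by blast
  then obtain ed where ed: "\<forall>i. i < length vs \<longrightarrow> ed i \<in> E \<and>
      {fst (ends (ed i)), snd (ends (ed i))} = {vs ! i, vs ! ((i + 1) mod length vs)}"
    by metis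
  interpret cyc V E ends vs ed
    using sg vs ed by unfold_locales auto
  show ?thesis by (rule not_strong)
qed

theorem theorem3:
  fixes V :: "'v set" and E :: "'e set" and ends :: "'e \<Rightarrow> 'v \<times> 'v"
  assumes "supply_graph V E ends"
  shows "strong_uniqueness V E ends \<longleftrightarrow> \<not> has_long_cycle V E ends"
  using dir1[OF assms] dir2[OF assms] by blast


end
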